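(* Let $(V,\|\cdot\|)$ be a Banach space. Then $V$ admits exactly one conical bicombing, namely the one given by linear segments, $\sigma(x,y,t)=(1-t)x+ty$.
   Context: A bicombing on a metric space $(X,d)$ is a map $\sigma\colon X\times X\times[0,1]\to X$ such that each $\sigma_{xy}:=\sigma(x,y,\cdot)$ is a geodesic from $x$ to $y$ ($\sigma_{xy}(0)=x$, $\sigma_{xy}(1)=y$, $d(\sigma_{xy}(s),\sigma_{xy}(t))=|s-t|d(x,y)$). It is conical if $d(\sigma_{xy}(t),\sigma_{x'y'}(t))\le(1-t)d(x,x')+t\,d(y,y')$ for all $x,y,x',y'\in X$ and $t\in[0,1]$. The Banach space carries the metric $d(x,y)=\|x-y\|$. *)

theory Defs
  imports "HOL-Analysis.Analysis"
begin

text \<open>Only the values for t in [0,1]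
are relevant; values outside [0,1] are unconstrained.\<close>

definition bicombing :: "('a::metric_space \<Rightarrow> 'a \<Rightarrow> real \<Rightarrow> 'a) \<Rightarrow> bool" where
  "bicombing \<sigma> \<longleftrightarrow>
     (\<forall>x y. \<sigma> x y 0 = x \<and> \<sigma> x y 1 = y \<and>
        (\<forall>s\<in>{0..1}. \<forall>t\<in>{0..1}. dist (\<sigma> x y s) (\<sigma> x y t) = \<bar>s - t\<bar> * dist x y))"

definition conical_bicombing :: "('a::metric_space \<Rightarrow> 'a \<Rightarrow> real \<Rightarrow> 'a) \<Rightarrow> bool" where
  "conical_bicombing \<sigma> \<longleftrightarrow> bicombing \<sigma> \<and>
     (\<forall>x y x' y'. \<forall>t\<in>{0..1}.
        dist (\<sigma> x y t) (\<sigma> x' y' t) \<le> (1 - t) * dist x x' + t * dist y y')"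

end

theory Submission
  imports Defs
begin

lemma nconv:
  fixes v u :: "'a::real_normed_vector"
  assumes "a < b" "b < c"
  shows "(c - a) * norm (v + b *\<^sub>R u) \<le> (c - b) * norm (v + a *\<^sub>R u) + (b - a) * norm (v + c *\<^sub>R u)"
proof -
  have eq: "(c - a) *\<^sub>R (v + b *\<^sub>R u) = (c - b) *\<^sub>R (v + a *\<^sub>R u) + (b - a) *\<^sub>R (v + c *\<^sub>R u)"
    by (simp add: algebra_simps)
  have "(c - a) * norm (v + b *\<^sub>R u) = norm ((c - a) *\<^sub>R (v + b *\<^sub>R u))"
    using assms by simp
  also have "\<dots> \<le> norm ((c - b) *\<^sub>R (v + a *\<^sub>R u)) + norm ((b - a) *\<^sub>R (v + c *\<^sub>R u))"
    unfolding eq by (rule norm_triangle_ineq)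
  also have "\<dots> = (c - b) * norm (v + a *\<^sub>R u) + (b - a) * norm (v + c *\<^sub>R u)"
    using assms by simp
  finally show ?thesis .
qed

lemma clemma:
  fixes p x y :: "'a::real_normed_vector"
  assumes t: "0 < t" "t < 1"
    and H: "\<And>c. norm (p - c) \<le> (1 - t) * norm (x - c) + t * norm (y - c)"
  shows "p = (1 - t) *\<^sub>R x + t *\<^sub>R y"
proof (rule ccontr)
  assume ne: "p \<noteq> (1 - t) *\<^sub>R x + t *\<^sub>R y"
  define l where "l = (1 - t) *\<^sub>R x + t *\<^sub>R y"
  define e where "e = p - l"
  define \<epsilon> where "\<epsilon> = norm e"
  have epos: "\<epsilon> > 0" using ne unfolding \<epsilon>_def e_def l_def by simp
  define v where "v = (1 / \<epsilon>) *\<^sub>R e"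
  have nv: "norm v = 1" using epos unfolding v_def \<epsilon>_def by simp
  have ev: "e = \<epsilon> *\<^sub>R v" using epos unfolding v_def by simp
  define u where "u = y - x"
  define D where "D = norm u"
  have D0: "D \<ge> 0" unfolding D_def by simp
  obtain m :: nat where m: "real m * \<epsilon> > D"
    using reals_Archimedean3[OF epos] by blast
  define R where "R = 8 * real m * D + 1"
  have Rpos: "R > 0" proof -
    have "0 \<le> 8 * real m * D" using D0 by simp
    thus ?thesis unfolding R_def by linarith
  qed
  define \<psi> where "\<psi> s = norm (R *\<^sub>R v + s *\<^sub>R u)" for s
  define S where "S j = \<psi> (j + 1 - t) - \<psi> (j - t)" for j
  have Sb: "\<bar>S j\<bar> \<le> D" for j
  proof -
    have "\<bar>S j\<bar> \<le> norm ((R *\<^sub>R v + (j + 1 - t) *\<^sub>R u) - (R *\<^sub>R v + (j - t) *\<^sub>R u))"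
      unfolding S_def \<psi>_def by (rule norm_triangle_ineq3)
    also have "\<dots> = D" unfolding D_def by (simp add: algebra_simps)
    finally show ?thesis .
  qed
  have c1: "norm (e + (R *\<^sub>R v + k *\<^sub>R u)) \<le> (1 - t) * \<psi> (k - t) + t * \<psi> (k + 1 - t)" for k
  proof -
    define c where "c = l - (R *\<^sub>R v + k *\<^sub>R u)"
    have "p - c = e + (R *\<^sub>R v + k *\<^sub>R u)" unfolding c_def e_def by simp
    moreover have "x - c = R *\<^sub>R v + (k - t) *\<^sub>R u"
      unfolding c_def l_def u_def by (simp add: algebra_simps)
    moreover have "y - c = R *\<^sub>R v + (k + 1 - t) *\<^sub>R u"
      unfolding c_def l_def u_def by (simp add: algebra_simps)
    ultimately show ?thesis using H[of c] unfolding \<psi>_def by simp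
  qed
  have c2: "\<psi> k + \<epsilon> / 2 \<le> norm (e + (R *\<^sub>R v + k *\<^sub>R u))" if k: "0 \<le> k" "4 * k * D \<le> R" for k
  proof -
    define Q where "Q = e + (R *\<^sub>R v + k *\<^sub>R u)"
    have "(R + \<epsilon>) *\<^sub>R (R *\<^sub>R v + k *\<^sub>R u) = R *\<^sub>R Q + (\<epsilon> * k) *\<^sub>R u"
      unfolding Q_def ev by (simp add: algebra_simps)
    hence "(R + \<epsilon>) * \<psi> k = norm (R *\<^sub>R Q + (\<epsilon> * k) *\<^sub>R u)"
      using Rpos epos unfolding \<psi>_def by (metis abs_of_pos add_pos_pos norm_scaleR)
    also have "\<dots> \<le> norm (R *\<^sub>R Q) + norm ((\<epsilon> * k) *\<^sub>R u)" by (rule norm_triangle_ineq)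
    also have "\<dots> = R * norm Q + \<epsilon> * k * D"
      using Rpos epos k unfolding D_def by simp
    finally have n1: "(R + \<epsilon>) * \<psi> k \<le> R * norm Q + \<epsilon> * k * D" .
    moreover have "\<psi> k \<ge> R - k * D"
    proof -
      have "norm (R *\<^sub>R v) \<le> norm (R *\<^sub>R v + k *\<^sub>R u) + norm (k *\<^sub>R u)"
        by (metis add_diff_cancel_right' norm_triangle_ineq4)
      thus ?thesis using nv Rpos k unfolding \<psi>_def D_def by simp
    qed
    hence "\<epsilon> * \<psi> k \<ge> \<epsilon> * (R - k * D)" using epos by (intro mult_left_mono) auto
    hence "R * norm Q \<ge> R * \<psi> k + \<epsilon> * (R - 2 * k * D)"
      using n1 by (simp add: algebra_simps)
    moreover have "\<epsilon> * (R - 2 * k * D) \<ge> \<epsilon> * (R / 2)"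
      using epos k by (intro mult_left_mono) auto
    ultimately have "R * norm Q \<ge> R * (\<psi> k + \<epsilon> / 2)" by (simp add: algebra_simps)
    thus ?thesis using Rpos unfolding Q_def by simp
  qed
  have step: "S (k + 1) \<ge> S (k - 1) + 2 * \<epsilon>" if k: "0 \<le> k" "4 * k * D \<le> R" for k
  proof -
    have g: "\<psi> k + \<epsilon> / 2 \<le> (1 - t) * \<psi> (k - t) + t * \<psi> (k + 1 - t)"
      using c1[of k] c2[OF k] by simp
    have B: "(k + 2 - t - k) * \<psi> (k + 1 - t) \<le> (k + 2 - t - (k + 1 - t)) * \<psi> k + (k + 1 - t - k) * \<psi> (k + 2 - t)"
      unfolding \<psi>_def by (rule nconv) (use t in auto)
    have A: "(k - (k - 1 - t)) * \<psi> (k - t) \<le> (k - (k - t)) * \<psi> (k - 1 - t) + (k - t - (k - 1 - t)) * \<psi> k"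
      unfolding \<psi>_def by (rule nconv) (use t in auto)
    have S1: "S (k + 1) = \<psi> (k + 2 - t) - \<psi> (k + 1 - t)" unfolding S_def by (simp add: algebra_simps)
    have S2: "S (k - 1) = \<psi> (k - t) - \<psi> (k - 1 - t)" unfolding S_def by (simp add: algebra_simps)
    define a where "a = \<psi> (k - t) - \<psi> k"
    define b where "b = \<psi> (k + 1 - t) - \<psi> k"
    have bb: "b \<le> (1 - t) * S (k + 1)" using B unfolding S1 b_def by (simp add: algebra_simps)
    have aa: "a \<le> - t * S (k - 1)" using A unfolding S2 a_def by (simp add: algebra_simps)
    have "\<epsilon> / 2 \<le> (1 - t) * a + t * b" using g unfolding a_def b_def by (simp add: algebra_simps)
    also have "\<dots> \<le> (1 - t) * (- t * S (k - 1)) + t * ((1 - t) * S (k + 1))"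
      using aa bb t by (intro add_mono mult_left_mono) auto
    also have "\<dots> = (t * (1 - t)) * (S (k + 1) - S (k - 1))" by (simp add: algebra_simps)
    finally have *: "\<epsilon> / 2 \<le> (t * (1 - t)) * (S (k + 1) - S (k - 1))" .
    have q: "0 \<le> (t - 1/2)^2" by simp
    have q2: "t * (1 - t) = 1/4 - (t - 1/2)^2" by (simp add: power2_eq_square algebra_simps)
    have tt1: "t * (1 - t) \<le> 1 / 4" using q q2 by linarith
    have tt2: "t * (1 - t) > 0" using t by (intro mult_pos_pos) auto
    note tt = tt1 tt2
    show ?thesis
    proof (cases "S (k + 1) - S (k - 1) \<ge> 0")
      case True
      hence "(t * (1 - t)) * (S (k + 1) - S (k - 1)) \<le> (1/4) * (S (k + 1) - S (k - 1))"
        using tt by (intro mult_right_mono) auto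
      thus ?thesis using * by simp
    next
      case False
      hence "(t * (1 - t)) * (S (k + 1) - S (k - 1)) < 0" using tt by (simp add: mult_pos_neg)
      thus ?thesis using * epos by simp
    qed
  qed
  have ind: "n \<le> m \<Longrightarrow> S (2 * real n + 1) \<ge> S 1 + 2 * real n * \<epsilon>" for n
  proof (induction n)
    case 0 thus ?case by simp
  next
    case (Suc n)
    have nm: "8 * (real n + 1) \<le> 8 * real m" using Suc.prems by simp
    have "8 * (real n + 1) * D \<le> 8 * real m * D" using mult_right_mono[OF nm D0] .
    hence k: "0 \<le> 2 * real n + 2" "4 * (2 * real n + 2) * D \<le> R"
      unfolding R_def by (simp_all add: algebra_simps)
    have "S (2 * real n + 2 + 1) \<ge> S (2 * real n + 2 - 1) + 2 * \<epsilon>" by (rule step[OF k])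
    moreover have "2 * real n + 2 - 1 = 2 * real n + 1" by simp
    moreover have "2 * real (Suc n) + 1 = 2 * real n + 2 + 1" by simp
    ultimately show ?case using Suc by (simp add: algebra_simps)
  qed
  have "S (2 * real m + 1) \<ge> S 1 + 2 * real m * \<epsilon>" using ind by simp
  moreover have "S (2 * real m + 1) \<le> D" "S 1 \<ge> - D" using Sb[of "2 * real m + 1"] Sb[of 1] by auto
  ultimately show False using m by linarith
qed

theorem proposition3p3:
  shows "conical_bicombing (\<lambda>(x::'a::banach) y t. (1 - t) *\<^sub>R x + t *\<^sub>R y) \<and>
    (\<forall>\<sigma> :: 'a \<Rightarrow> 'a \<Rightarrow> real \<Rightarrow> 'a. conical_bicombing \<sigma> \<longrightarrow>
       (\<forall>x y. \<forall>t\<in>{0..1}. \<sigma> x y t = (1 - t) *\<^sub>R x + t *\<^sub>R y))"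
proof (intro conjI allI impI ballI)
  show "conical_bicombing (\<lambda>(x::'a::banach) y t. (1 - t) *\<^sub>R x + t *\<^sub>R y)"
    unfolding conical_bicombing_def bicombing_def
  proof (intro conjI allI ballI)
    fix x y :: 'a and s t :: real
    have "(1 - s) *\<^sub>R x + s *\<^sub>R y - ((1 - t) *\<^sub>R x + t *\<^sub>R y) = (s - t) *\<^sub>R (y - x)"
      by (simp add: algebra_simps)
    thus "dist ((1 - s) *\<^sub>R x + s *\<^sub>R y) ((1 - t) *\<^sub>R x + t *\<^sub>R y) = \<bar>s - t\<bar> * dist x y"
      by (simp add: dist_norm norm_minus_commute)
  next
    fix x y x' y' :: 'a and t :: real
    assume t: "t \<in> {0..1}"
    have "(1 - t) *\<^sub>R x + t *\<^sub>R y - ((1 - t) *\<^sub>R x' + t *\<^sub>R y') = (1 - t) *\<^sub>R (x - x') + t *\<^sub>R (y - y')"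
      by (simp add: algebra_simps)
    moreover have "norm ((1 - t) *\<^sub>R (x - x') + t *\<^sub>R (y - y')) \<le> (1 - t) * norm (x - x') + t * norm (y - y')"
    proof -
      have "norm ((1 - t) *\<^sub>R (x - x') + t *\<^sub>R (y - y')) \<le> norm ((1 - t) *\<^sub>R (x - x')) + norm (t *\<^sub>R (y - y'))"
        by (rule norm_triangle_ineq)
      also have "\<dots> = (1 - t) * norm (x - x') + t * norm (y - y')" using t by simp
      finally show ?thesis .
    qed
    ultimately show "dist ((1 - t) *\<^sub>R x + t *\<^sub>R y) ((1 - t) *\<^sub>R x' + t *\<^sub>R y') \<le> (1 - t) * dist x x' + t * dist y y'"
      by (simp add: dist_norm)
  qed simp_all
next
  fix \<sigma> :: "'a \<Rightarrow> 'a \<Rightarrow> real \<Rightarrow> 'a" and x y :: 'a and t :: real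
  assume c: "conical_bicombing \<sigma>" and t: "t \<in> {0..1}"
  have b: "bicombing \<sigma>" using c unfolding conical_bicombing_def by simp
  have cc: "\<sigma> z z t = z" for z
  proof -
    have "\<forall>s\<in>{0..1}. \<forall>t\<in>{0..1}. dist (\<sigma> z z s) (\<sigma> z z t) = \<bar>s - t\<bar> * dist z z"
      using b unfolding bicombing_def by blast
    moreover have "(0::real) \<in> {0..1}" by simp
    ultimately have "dist (\<sigma> z z t) (\<sigma> z z 0) = \<bar>t - 0\<bar> * dist z z" using t by blast
    moreover have "\<sigma> z z 0 = z" using b unfolding bicombing_def by blast
    ultimately show ?thesis by simp
  qed
  show "\<sigma> x y t = (1 - t) *\<^sub>R x + t *\<^sub>R y"
  proof (cases "t = 0 \<or> t = 1")
    case True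
    thus ?thesis using b unfolding bicombing_def by auto
  next
    case False
    hence t': "0 < t" "t < 1" using t by auto
    show ?thesis
    proof (rule clemma[OF t'])
      fix z
      have "dist (\<sigma> x y t) (\<sigma> z z t) \<le> (1 - t) * dist x z + t * dist y z"
        using c t unfolding conical_bicombing_def by blast
      thus "norm (\<sigma> x y t - z) \<le> (1 - t) * norm (x - z) + t * norm (y - z)"
        using cc[of z] by (simp add: dist_norm)
    qed
  qed
qed

end
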